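(* Let $t$ be a positive integer, let $\mathbb{F}_{2^t}=\{\alpha_1,\ldots,\alpha_{2^t}\}$ be the finite field of order $2^t$, fix a group isomorphism $(\mathbb{F}_{2^t},+)\cong\mathbb{Z}_2^t$, and define $\phi:\mathbb{F}_{2^t}\to GL_{2^t}(\mathbb{R})$ by $\phi(x)=r^{x_1}\otimes\cdots\otimes r^{x_t}$ where $(x_1,\ldots,x_t)\in\mathbb{Z}_2^t$ is the image of $x$ and $r=\begin{pmatrix}0&1\\1&0\end{pmatrix}$. Let $W=(w_{kl})_{k,l=1}^{2^t}$ be a Hadamard matrix of order $2^t$, and for $i\in\{1,\ldots,2^t\}$ let $W_i$ be the $2^{2t}\times2^{2t}$ block matrix whose $(k,l)$-block is $w_{kl}\phi(\alpha_i\alpha_l)$. Then for any distinct $i,j\in\{1,\ldots,2^t\}$, $W_iW_j^\top$ is a Bush-type Hadamard matrix of order $2^{2t}$.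
   Context: A Hadamard matrix of order $n$ is an $n\times n$ $(1,-1)$-matrix $H$ with $HH^\top=nI_n$. A Hadamard matrix $H$ of order $n^2$ is of Bush-type if, partitioned into $n\times n$ blocks $H=(H_{ij})_{i,j=1}^n$, it satisfies $H_{ii}=J_n$ for all $i$ and $H_{ij}J_n=J_nH_{ij}=O_n$ for all $i\neq j$, where $J_n$ is the all-ones and $O_n$ the zero $n\times n$ matrix. *)

theory Defs
  imports "Jordan_Normal_Form.Matrix"
begin

definition kron_mat :: "'a::times mat \<Rightarrow> 'a mat \<Rightarrow> 'a mat" where
  "kron_mat A B = mat (dim_row A * dim_row B) (dim_col A * dim_col B)
     (\<lambda>(i, j). A $$ (i div dim_row B, j div dim_col B) * B $$ (i mod dim_row B, j mod dim_col B))"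

definition r_mat :: "real mat" where
  "r_mat = mat 2 2 (\<lambda>(i, j). if i = j then 0 else 1)"

definition J_mat :: "nat \<Rightarrow> real mat" where
  "J_mat n = mat n n (\<lambda>_. 1)"

definition hadamard :: "nat \<Rightarrow> real mat \<Rightarrow> bool" where
  "hadamard n H \<longleftrightarrow> H \<in> carrier_mat n n
     \<and> (\<forall>i<n. \<forall>j<n. H $$ (i, j) = 1 \<or> H $$ (i, j) = -1)
     \<and> H * transpose_mat H = of_nat n \<cdot>\<^sub>m 1\<^sub>m n"

definition block_of :: "nat \<Rightarrow> 'a mat \<Rightarrow> nat \<Rightarrow> nat \<Rightarrow> 'a mat" where
  "block_of n H i j = mat n n (\<lambda>(a, b). H $$ (i * n + a, j * n + b))"

definition bush_type :: "nat \<Rightarrow> real mat \<Rightarrow> bool" where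
  "bush_type n H \<longleftrightarrow> hadamard (n^2) H
     \<and> (\<forall>i<n. block_of n H i i = J_mat n)
     \<and> (\<forall>i<n. \<forall>j<n. i \<noteq> j \<longrightarrow>
          block_of n H i j * J_mat n = 0\<^sub>m n n \<and> J_mat n * block_of n H i j = 0\<^sub>m n n)"

text \<open>Elements of Z_2^t are represented as bit vectors v :: nat \<Rightarrow> bool
  with v k = False for k \<ge> t (coordinates x_1..x_t are v 0 .. v (t-1)),
  with addition given by pointwise exclusive or.\<close>
definition Z2_pow :: "nat \<Rightarrow> (nat \<Rightarrow> bool) set" where
  "Z2_pow t = {v. \<forall>k\<ge>t. \<not> v k}"

definition additive_iso_Z2 :: "nat \<Rightarrow> ('a::ab_group_add \<Rightarrow> nat \<Rightarrow> bool) \<Rightarrow> bool" where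
  "additive_iso_Z2 t \<iota> \<longleftrightarrow> bij_betw \<iota> UNIV (Z2_pow t)
     \<and> (\<forall>x y. \<iota> (x + y) = (\<lambda>k. \<iota> x k \<noteq> \<iota> y k))"

definition phi :: "nat \<Rightarrow> ('a \<Rightarrow> nat \<Rightarrow> bool) \<Rightarrow> 'a \<Rightarrow> real mat" where
  "phi t \<iota> x = foldr kron_mat (map (\<lambda>k. r_mat ^\<^sub>m (if \<iota> x k then 1 else 0)) [0..<t]) (1\<^sub>m 1)"

definition W_blk :: "nat \<Rightarrow> ('a::field \<Rightarrow> nat \<Rightarrow> bool) \<Rightarrow> (nat \<Rightarrow> 'a) \<Rightarrow> real mat \<Rightarrow> nat \<Rightarrow> real mat" where
  "W_blk t \<iota> \<alpha> W i = mat (2^t * 2^t) (2^t * 2^t)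
     (\<lambda>(a, b). W $$ (a div 2^t, b div 2^t) *
               phi t \<iota> (\<alpha> i * \<alpha> (b div 2^t)) $$ (a mod 2^t, b mod 2^t))"

end

theory Submission
  imports Defs "Jordan_Normal_Form.Determinant"
begin

lemma sum_split_nn:
  fixes g :: "nat \<Rightarrow> 'b::comm_monoid_add"
  shows "(\<Sum>p<n*k. g p) = (\<Sum>m<n. \<Sum>c<k. g (m*k+c))"
proof -
  have "(\<Sum>p<n*k. g p) = (\<Sum>m<n. sum g {m*k..<m*k+k})"
    by (rule sum.nat_group[symmetric])
  also have "\<dots> = (\<Sum>m<n. \<Sum>c<k. g (m*k+c))"
  proof (rule sum.cong[OF refl])
    fix m
    show "sum g {m*k..<m*k+k} = (\<Sum>c<k. g (m*k+c))"
      using sum.shift_bounds_nat_ivl[of g 0 "m*k" k] by (simp add: atLeast0LessThan add.commute)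
  qed
  finally show ?thesis .
qed

lemma mult_entry:
  fixes A B :: "'b::comm_ring_1 mat"
  assumes "A \<in> carrier_mat r s" "B \<in> carrier_mat s u" "i < r" "j < u"
  shows "(A*B)$$(i,j) = (\<Sum>l<s. A$$(i,l)*B$$(l,j))"
  using assms by (simp add: scalar_prod_def atLeast0LessThan)

lemma reindex_L:
  fixes \<delta> \<alpha> :: "nat \<Rightarrow> 'a::field" and F :: "nat \<Rightarrow> real"
  assumes \<delta>: "bij_betw \<delta> {..<n} UNIV" and \<alpha>: "bij_betw \<alpha> {..<n} UNIV" and e: "e \<noteq> 0"
  shows "(\<Sum>c<n. F (inv_into {..<n} \<alpha> ((d + \<delta> c) / e))) = (\<Sum>l<n. F l)"
proof -
  have "(\<Sum>c<n. F (inv_into {..<n} \<alpha> ((d + \<delta> c) / e))) = (\<Sum>y\<in>UNIV. F (inv_into {..<n} \<alpha> ((d + y) / e)))"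
    using sum.reindex_bij_betw[OF \<delta>, of "\<lambda>y. F (inv_into {..<n} \<alpha> ((d + y) / e))"] by simp
  also have "\<dots> = (\<Sum>z\<in>UNIV. F (inv_into {..<n} \<alpha> z))"
  proof -
    have b: "bij_betw (\<lambda>y. (d + y) / e) UNIV UNIV"
      by (rule bij_betwI[where g="\<lambda>z. z * e - d"]) (use e in auto)
    show ?thesis using sum.reindex_bij_betw[OF b, of "\<lambda>z. F (inv_into {..<n} \<alpha> z)"] by simp
  qed
  also have "\<dots> = (\<Sum>l<n. F (inv_into {..<n} \<alpha> (\<alpha> l)))"
    using sum.reindex_bij_betw[OF \<alpha>, of "\<lambda>z. F (inv_into {..<n} \<alpha> z)"] by simp
  also have "\<dots> = (\<Sum>l<n. F l)"
    using bij_betw_inv_into_left[OF \<alpha>] by (intro sum.cong) auto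
  finally show ?thesis .
qed


lemma bush_core:
  fixes W H :: "real mat" and \<delta> \<alpha> :: "nat \<Rightarrow> 'a::field" and e :: 'a
  assumes n: "n > 0"
    and \<delta>: "bij_betw \<delta> {..<n} UNIV" and \<alpha>: "bij_betw \<alpha> {..<n} UNIV" and e: "e \<noteq> 0"
    and W: "hadamard n W" and Hc: "H \<in> carrier_mat (n*n) (n*n)"
    and Hent: "\<And>k m a b. k<n \<Longrightarrow> m<n \<Longrightarrow> a<n \<Longrightarrow> b<n \<Longrightarrow>
        H $$ (k*n+a, m*n+b) = W $$ (k, inv_into {..<n} \<alpha> ((\<delta> a + \<delta> b)/e))
                              * W $$ (m, inv_into {..<n} \<alpha> ((\<delta> a + \<delta> b)/e))"
  shows "bush_type n H"
proof -
  define L where "L a b = inv_into {..<n} \<alpha> ((\<delta> a + \<delta> b)/e)" for a b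
  have HL: "H $$ (k*n+a, m*n+b) = W $$ (k, L a b) * W $$ (m, L a b)"
    if "k<n" "m<n" "a<n" "b<n" for k m a b using Hent[OF that] by (simp add: L_def)
  have Lsym: "L a b = L b a" for a b by (simp add: L_def add.commute)
  have surj: "\<alpha> ` {..<n} = UNIV" using \<alpha> by (simp add: bij_betw_def)
  have Lr: "L a b < n" for a b
    unfolding L_def using inv_into_into[of _ \<alpha> "{..<n}"] surj by auto
  have Linj: "a = b" if "a<n" "b<n" "L a c = L b c" for a b c
  proof -
    have "\<alpha> (L a c) = \<alpha> (L b c)" using that by simp
    hence "(\<delta> a + \<delta> c)/e = (\<delta> b + \<delta> c)/e" unfolding L_def
      using f_inv_into_f[of _ \<alpha> "{..<n}"] surj by simp
    hence "\<delta> a = \<delta> b" using e by (simp add: divide_cancel_right)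
    thus ?thesis using \<delta> that by (auto simp: bij_betw_def inj_on_def)
  qed
  have Wc: "W \<in> carrier_mat n n" and Wpm: "\<And>i j. i<n \<Longrightarrow> j<n \<Longrightarrow> W $$ (i, j) = 1 \<or> W $$ (i, j) = -1"
    and WWT: "W * transpose_mat W = of_nat n \<cdot>\<^sub>m 1\<^sub>m n" using W by (auto simp: hadamard_def)
  have WW: "(\<Sum>l<n. W$$(k,l)*W$$(m,l)) = (if k=m then real n else 0)" if "k<n" "m<n" for k m
  proof -
    have "(W * transpose_mat W) $$ (k,m) = (\<Sum>l<n. W$$(k,l)*W$$(m,l))"
      using Wc that by (subst mult_entry[of _ n n _ n]) auto
    thus ?thesis using WWT that by (auto split: if_splits)
  qed
  have WTW: "(\<Sum>p<n. W$$(p,l1)*W$$(p,l2)) = (if l1=l2 then real n else 0)" if "l1<n" "l2<n" for l1 l2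
  proof -
    define B where "B = (1 / real n) \<cdot>\<^sub>m transpose_mat W"
    have Bc: "B \<in> carrier_mat n n" using Wc by (simp add: B_def)
    have "W * B = 1\<^sub>m n"
      using Wc n WWT by (simp add: B_def mult_smult_distrib[of _ n n _ n]) (rule eq_matI, auto)
    hence BW: "B * W = 1\<^sub>m n" by (rule mat_mult_left_right_inverse[OF Wc Bc])
    have "(B * W) $$ (l1,l2) = (1/real n) * (\<Sum>p<n. W$$(p,l1)*W$$(p,l2))"
      using Wc Bc that by (subst mult_entry[of _ n n _ n]) (auto simp: B_def sum_distrib_left)
    thus ?thesis using BW that n by (auto simp: field_simps split: if_splits)
  qed
  have sumL: "(\<Sum>c<n. F (L a c)) = (\<Sum>l<n. F l)" for a and F :: "nat \<Rightarrow> real"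
    unfolding L_def by (rule reindex_L[OF \<delta> \<alpha> e])
  have decomp: "q = (q div n) * n + q mod n \<and> q div n < n \<and> q mod n < n" if "q < n*n" for q
    using that n by (auto simp: less_mult_imp_div_less)
  have Hpm: "H $$ (q1, q2) = 1 \<or> H $$ (q1, q2) = -1" if qq: "q1 < n*n" "q2 < n*n" for q1 q2
  proof -
    obtain k a m b where "q1 = k*n+a" "q2 = m*n+b" "k<n" "a<n" "m<n" "b<n"
      using decomp[OF qq(1)] decomp[OF qq(2)] by blast
    thus ?thesis using HL Wpm[of k "L a b"] Wpm[of m "L a b"] Lr by auto
  qed
  have HH: "(H * transpose_mat H) $$ (q1, q2) = (of_nat (n^2) \<cdot>\<^sub>m 1\<^sub>m (n^2)) $$ (q1,q2)"
    if qq: "q1 < n*n" "q2 < n*n" for q1 q2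
  proof -
    obtain k a m b where q: "q1 = k*n+a" "q2 = m*n+b" and kamb: "k<n" "a<n" "m<n" "b<n"
      using decomp[OF qq(1)] decomp[OF qq(2)] by blast
    have "(H * transpose_mat H) $$ (q1, q2) = (\<Sum>p<n*n. H$$(q1,p)*H$$(q2,p))"
      using Hc that by (subst mult_entry[of _ "n*n" "n*n" _ "n*n"]) auto
    also have "\<dots> = (\<Sum>p<n. \<Sum>c<n. H$$(k*n+a,p*n+c)*H$$(m*n+b,p*n+c))"
      unfolding q by (rule sum_split_nn)
    also have "\<dots> = (\<Sum>p<n. \<Sum>c<n. W $$ (k, L a c) * W $$ (m, L b c) * (W $$ (p, L a c) * W $$ (p, L b c)))"
      using kamb by (intro sum.cong refl) (simp add: HL)
    also have "\<dots> = (\<Sum>c<n. W $$ (k, L a c) * W $$ (m, L b c) * (\<Sum>p<n. W $$ (p, L a c) * W $$ (p, L b c)))"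
      by (subst sum.swap) (simp add: sum_distrib_left)
    also have "\<dots> = (\<Sum>c<n. W $$ (k, L a c) * W $$ (m, L b c) * (if L a c = L b c then real n else 0))"
      using Lr by (intro sum.cong refl) (simp add: WTW)
    finally have eq: "(H * transpose_mat H) $$ (q1, q2) = \<dots>" .
    show ?thesis
    proof (cases "a = b")
      case True
      have "(\<Sum>c<n. W $$ (k, L a c) * W $$ (m, L b c) * (if L a c = L b c then real n else 0))
          = real n * (\<Sum>c<n. W $$ (k, L a c) * W $$ (m, L a c))"
        using True by (simp add: sum_distrib_left mult_ac)
      also have "\<dots> = real n * (if k = m then real n else 0)"
        using sumL[of "\<lambda>l. W $$ (k, l) * W $$ (m, l)" a] WW kamb by simp
      finally show ?thesis using eq that q True by (auto simp: power2_eq_square)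
    next
      case False
      have "L a c \<noteq> L b c" if "c < n" for c using Linj kamb False by blast
      hence "(\<Sum>c<n. W $$ (k, L a c) * W $$ (m, L b c) * (if L a c = L b c then real n else 0)) = 0"
        by simp
      moreover have "q1 \<noteq> q2" using q kamb False
        by (metis mod_mult_self3 mod_less)
      ultimately show ?thesis using eq that by (auto simp: power2_eq_square)
    qed
  qed
  show ?thesis
    unfolding bush_type_def hadamard_def
  proof (intro conjI allI impI)
    show "H \<in> carrier_mat (n^2) (n^2)" using Hc by (simp add: power2_eq_square)
  next
    fix q1 q2 assume "q1 < n^2" "q2 < n^2"
    thus "H $$ (q1, q2) = 1 \<or> H $$ (q1, q2) = -1" using Hpm by (simp add: power2_eq_square)
  next
    show "H * transpose_mat H = of_nat (n^2) \<cdot>\<^sub>m 1\<^sub>m (n^2)"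
      using Hc HH by (intro eq_matI) (auto simp: power2_eq_square)
  next
    fix k assume k: "k < n"
    show "block_of n H k k = J_mat n"
    proof (intro eq_matI)
      fix a b assume "a < dim_row (J_mat n)" "b < dim_col (J_mat n)"
      hence ab: "a < n" "b < n" by (auto simp: J_mat_def)
      have "W $$ (k, L a b) * W $$ (k, L a b) = 1" using Wpm[OF k Lr[of a b]] by auto
      thus "block_of n H k k $$ (a, b) = J_mat n $$ (a, b)"
        using ab k HL by (simp add: block_of_def J_mat_def)
    qed (auto simp: block_of_def J_mat_def)
  next
    fix k m assume km: "k < n" "m < n" "k \<noteq> m"
    show "block_of n H k m * J_mat n = 0\<^sub>m n n"
    proof (intro eq_matI)
      fix a b assume "a < dim_row (0\<^sub>m n n :: real mat)" "b < dim_col (0\<^sub>m n n :: real mat)"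
      hence ab: "a < n" "b < n" by auto
      have "(block_of n H k m * J_mat n) $$ (a,b) = (\<Sum>c<n. W $$ (k, L a c) * W $$ (m, L a c))"
        using ab km by (subst mult_entry[of _ n n _ n]) (auto simp: block_of_def J_mat_def HL)
      also have "\<dots> = 0" using sumL[of "\<lambda>l. W $$ (k, l) * W $$ (m, l)" a] WW km by simp
      finally show "(block_of n H k m * J_mat n) $$ (a,b) = 0\<^sub>m n n $$ (a,b)" using ab by simp
    qed (auto simp: block_of_def J_mat_def)
    show "J_mat n * block_of n H k m = 0\<^sub>m n n"
    proof (intro eq_matI)
      fix a b assume "a < dim_row (0\<^sub>m n n :: real mat)" "b < dim_col (0\<^sub>m n n :: real mat)"
      hence ab: "a < n" "b < n" by auto
      have "(J_mat n * block_of n H k m) $$ (a,b) = (\<Sum>c<n. W $$ (k, L b c) * W $$ (m, L b c))"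
        using ab km by (subst mult_entry[of _ n n _ n]) (auto simp: block_of_def J_mat_def HL Lsym)
      also have "\<dots> = 0" using sumL[of "\<lambda>l. W $$ (k, l) * W $$ (m, l)" b] WW km by simp
      finally show "(J_mat n * block_of n H k m) $$ (a,b) = 0\<^sub>m n n $$ (a,b)" using ab by simp
    qed (auto simp: block_of_def J_mat_def)
  qed
qed


lemma r_pow:
  "r_mat ^\<^sub>m (if x then 1 else 0) \<in> carrier_mat 2 2 \<and>
   (\<forall>i<2. \<forall>j<2. (r_mat ^\<^sub>m (if x then 1 else 0)) $$ (i,j) = (if (i \<noteq> j) = x then 1 else 0))"
  by (cases x) (auto simp: r_mat_def)

lemma bit_div_eq:
  fixes a :: nat
  assumes "a < 2 * 2^m"
  shows "a div 2^m = (if bit a m then 1 else 0)"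
proof -
  have "a div 2^m < 2" using assms by (simp add: less_mult_imp_div_less mult.commute)
  hence "a div 2^m = 0 \<or> a div 2^m = 1" by linarith
  thus ?thesis by (auto simp: bit_iff_odd)
qed

lemma F_formula:
  fixes bs :: "bool list"
  shows "foldr kron_mat (map (\<lambda>b. r_mat ^\<^sub>m (if b then 1 else 0)) bs) (1\<^sub>m 1) \<in> carrier_mat (2^length bs) (2^length bs)
    \<and> (\<forall>a<2^length bs. \<forall>b<2^length bs.
        foldr kron_mat (map (\<lambda>b. r_mat ^\<^sub>m (if b then 1 else 0)) bs) (1\<^sub>m 1) $$ (a,b)
        = (if (\<forall>k<length bs. (bit a (length bs - 1 - k) \<noteq> bit b (length bs - 1 - k)) = bs!k) then 1 else 0))"
proof (induction bs)
  case Nil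
  then show ?case by auto
next
  case (Cons x bs)
  define m where "m = length bs"
  define B where "B = foldr kron_mat (map (\<lambda>b. r_mat ^\<^sub>m (if b then 1 else 0)) bs) (1\<^sub>m 1)"
  define A where "A = r_mat ^\<^sub>m (if x then 1 else 0)"
  have Bc: "B \<in> carrier_mat (2^m) (2^m)" and Be: "\<And>a b. a<2^m \<Longrightarrow> b<2^m \<Longrightarrow> B $$ (a,b)
        = (if (\<forall>k<m. (bit a (m - 1 - k) \<noteq> bit b (m - 1 - k)) = bs!k) then 1 else 0)"
    using Cons.IH unfolding B_def m_def by auto
  have Ac: "A \<in> carrier_mat 2 2" and Ae: "\<And>i j. i<2 \<Longrightarrow> j<2 \<Longrightarrow> A $$ (i,j) = (if (i \<noteq> j) = x then 1 else 0)"
    using r_pow[of x] unfolding A_def by auto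
  have eq: "foldr kron_mat (map (\<lambda>b. r_mat ^\<^sub>m (if b then 1 else 0)) (x#bs)) (1\<^sub>m 1) = kron_mat A B"
    by (simp add: A_def B_def)
  have carr: "kron_mat A B \<in> carrier_mat (2^length (x#bs)) (2^length (x#bs))"
    using Ac Bc by (simp add: kron_mat_def m_def)
  have ent: "kron_mat A B $$ (a,b) = (if (\<forall>k<length (x#bs). (bit a (length (x#bs) - 1 - k) \<noteq> bit b (length (x#bs) - 1 - k)) = (x#bs)!k) then 1 else 0)"
    if ab: "a < 2^length (x#bs)" "b < 2^length (x#bs)" for a b
  proof -
    have ab': "a < 2 * 2^m" "b < 2 * 2^m" using ab by (auto simp: m_def)
    have "kron_mat A B $$ (a,b) = A $$ (a div 2^m, b div 2^m) * B $$ (a mod 2^m, b mod 2^m)"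
      using Ac Bc ab' by (simp add: kron_mat_def)
    also have "\<dots> = (if (bit a m \<noteq> bit b m) = x then 1 else 0) *
       (if (\<forall>k<m. (bit a (m - 1 - k) \<noteq> bit b (m - 1 - k)) = bs!k) then 1 else 0)"
    proof -
      have "A $$ (a div 2^m, b div 2^m) = (if (bit a m \<noteq> bit b m) = x then 1 else 0)"
        using Ae[of "a div 2^m" "b div 2^m"] bit_div_eq[OF ab'(1)] bit_div_eq[OF ab'(2)]
        by (auto split: if_splits)
      moreover have "B $$ (a mod 2^m, b mod 2^m) = (if (\<forall>k<m. (bit a (m - 1 - k) \<noteq> bit b (m - 1 - k)) = bs!k) then 1 else 0)"
      proof -
        have "bit (c mod 2^m) (m - 1 - k) = bit c (m - 1 - k)" if "k < m" for c :: nat and k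
          using that by (simp add: take_bit_eq_mod[symmetric] bit_take_bit_iff)
        thus ?thesis using Be[of "a mod 2^m" "b mod 2^m"] by (simp cong: conj_cong)
      qed
      ultimately show ?thesis by simp
    qed
    also have "\<dots> = (if (\<forall>k<length (x#bs). (bit a (length (x#bs) - 1 - k) \<noteq> bit b (length (x#bs) - 1 - k)) = (x#bs)!k) then 1 else 0)"
    proof -
      have "(\<forall>k<length (x#bs). (bit a (length (x#bs) - 1 - k) \<noteq> bit b (length (x#bs) - 1 - k)) = (x#bs)!k)
         \<longleftrightarrow> (bit a m \<noteq> bit b m) = x \<and> (\<forall>k<m. (bit a (m - 1 - k) \<noteq> bit b (m - 1 - k)) = bs!k)"
        by (auto simp: m_def less_Suc_eq_0_disj)
      thus ?thesis by simp
    qed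
    finally show ?thesis .
  qed
  show ?case using carr ent eq by simp
qed


lemma phi_alt:
  fixes \<iota> :: "'a \<Rightarrow> nat \<Rightarrow> bool"
  shows "phi t \<iota> x \<in> carrier_mat (2^t) (2^t) \<and>
    (\<forall>a<2^t. \<forall>b<2^t. phi t \<iota> x $$ (a,b) =
       (if (\<forall>k<t. (bit a (t - 1 - k) \<noteq> bit b (t - 1 - k)) = \<iota> x k) then 1 else 0))"
proof -
  have "phi t \<iota> x = foldr kron_mat (map (\<lambda>b. r_mat ^\<^sub>m (if b then 1 else 0)) (map (\<iota> x) [0..<t])) (1\<^sub>m 1)"
    by (simp add: phi_def comp_def)
  thus ?thesis using F_formula[of "map (\<iota> x) [0..<t]"] by simp
qed

lemma char2_eq:
  fixes a b c :: "'a::ab_group_add"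
  assumes "\<forall>x::'a. x + x = 0"
  shows "(a + b = c) \<longleftrightarrow> (a = c + b)"
proof -
  have "-b = b" using assms by (metis add_eq_0_iff)
  thus ?thesis by (metis add_diff_cancel diff_conv_add_uminus diff_add_cancel)
qed

lemma inner_sum:
  fixes \<delta> :: "nat \<Rightarrow> 'a::field"
  assumes c2: "\<forall>x::'a. x + x = 0" and \<delta>: "bij_betw \<delta> {..<n} UNIV"
  shows "(\<Sum>c<n. (if d1 + \<delta> c = u then 1 else 0) * (if d2 + \<delta> c = v then 1 else (0::real)))
     = (if d1 + d2 = u + v then 1 else 0)"
proof -
  have "(\<Sum>c<n. (if d1 + \<delta> c = u then 1 else 0) * (if d2 + \<delta> c = v then 1 else (0::real)))
     = (\<Sum>y\<in>UNIV. (if d1 + y = u then 1 else 0) * (if d2 + y = v then 1 else (0::real)))"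
    using sum.reindex_bij_betw[OF \<delta>, of "\<lambda>y. (if d1 + y = u then 1 else 0) * (if d2 + y = v then 1 else (0::real))"] by simp
  also have "\<dots> = (\<Sum>y\<in>UNIV. if y = u + d1 then (if d2 + y = v then 1 else (0::real)) else 0)"
    using char2_eq[OF c2, of _ d1 u] by (intro sum.cong refl) (auto simp: add.commute)
  also have "\<dots> = (if d2 + (u + d1) = v then 1 else 0)"
  proof -
    have "finite (UNIV :: 'a set)" using \<delta> bij_betw_finite by blast
    thus ?thesis by (subst sum.delta) auto
  qed
  also have "\<dots> = (if d1 + d2 = u + v then 1 else 0)"
  proof -
    have "(d2 + (u + d1) = v) \<longleftrightarrow> (d1 + d2 = u + v)"
      using char2_eq[OF c2, of "d1 + d2" u v] by (simp add: add_ac)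
    thus ?thesis by simp
  qed
  finally show ?thesis .
qed


lemma idx_lt:
  fixes k a n :: nat
  assumes "k < n" "a < n" shows "k*n+a < n*n"
proof -
  have "k*n + a < (k+1)*n" using assms by simp
  also have "\<dots> \<le> n*n" using assms by (intro mult_le_mono1) simp
  finally show ?thesis .
qed

theorem proposition5p1:
  fixes t :: nat
    and \<iota> :: "'a::{field, finite} \<Rightarrow> nat \<Rightarrow> bool"
    and \<alpha> :: "nat \<Rightarrow> 'a"
    and W :: "real mat"
    and i j :: nat
  assumes "t > 0"
    and "card (UNIV :: 'a set) = 2 ^ t"
    and "additive_iso_Z2 t \<iota>"
    and "bij_betw \<alpha> {0..<2 ^ t} (UNIV :: 'a set)"
    and "hadamard (2 ^ t) W"
    and "i < 2 ^ t" and "j < 2 ^ t" and "i \<noteq> j"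
  shows "bush_type (2 ^ t) (W_blk t \<iota> \<alpha> W i * transpose_mat (W_blk t \<iota> \<alpha> W j))"
proof -
  note assms_all = assms
  define n :: nat where "n = 2^t"
  have n: "n > 0" by (simp add: n_def)
  have card: "card (UNIV :: 'a set) = n" using assms(2) by (simp add: n_def)
  have \<iota>bij: "bij_betw \<iota> UNIV (Z2_pow t)" and \<iota>add: "\<And>x y. \<iota> (x + y) = (\<lambda>k. \<iota> x k \<noteq> \<iota> y k)"
    using assms(3) by (auto simp: additive_iso_Z2_def)
  have \<iota>inj: "inj \<iota>" using \<iota>bij by (simp add: bij_betw_def)
  have \<iota>range: "range \<iota> = Z2_pow t" using \<iota>bij by (simp add: bij_betw_def)
  have \<iota>0: "\<iota> 0 = (\<lambda>k. False)" using \<iota>add[of 0 0] by simp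
  have c2: "\<forall>x::'a. x + x = 0"
  proof
    fix x :: 'a
    have "\<iota> (x + x) = \<iota> 0" using \<iota>add[of x x] \<iota>0 by simp
    thus "x + x = 0" using \<iota>inj by (simp add: inj_eq)
  qed
  define \<beta> where "\<beta> a = (\<lambda>k. k < t \<and> bit a (t - 1 - k))" for a :: nat
  define \<delta> where "\<delta> a = inv_into UNIV \<iota> (\<beta> a)" for a
  have \<beta>Z: "\<beta> a \<in> Z2_pow t" for a by (simp add: \<beta>_def Z2_pow_def)
  have \<iota>\<delta>: "\<iota> (\<delta> a) = \<beta> a" for a unfolding \<delta>_def using \<beta>Z \<iota>range by (metis f_inv_into_f)
  have \<iota>Z: "\<iota> x \<in> Z2_pow t" for x using \<iota>range by blast
  have phiC: "phi t \<iota> x \<in> carrier_mat n n" for x using phi_alt[of t \<iota> x] by (simp add: n_def)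
  have phiE: "phi t \<iota> x $$ (a,b) = (if \<delta> a + \<delta> b = x then 1 else 0)" if ab: "a < n" "b < n" for x a b
  proof -
    have "(\<forall>k<t. (bit a (t - 1 - k) \<noteq> bit b (t - 1 - k)) = \<iota> x k) \<longleftrightarrow> (\<lambda>k. \<beta> a k \<noteq> \<beta> b k) = \<iota> x"
    proof
      assume h: "\<forall>k<t. (bit a (t - 1 - k) \<noteq> bit b (t - 1 - k)) = \<iota> x k"
      show "(\<lambda>k. \<beta> a k \<noteq> \<beta> b k) = \<iota> x"
      proof
        fix k show "(\<beta> a k \<noteq> \<beta> b k) = \<iota> x k"
          using h \<iota>Z[of x] by (cases "k < t") (auto simp: \<beta>_def Z2_pow_def)
      qed
    next
      assume "(\<lambda>k. \<beta> a k \<noteq> \<beta> b k) = \<iota> x"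
      thus "\<forall>k<t. (bit a (t - 1 - k) \<noteq> bit b (t - 1 - k)) = \<iota> x k"
        by (auto simp: \<beta>_def fun_eq_iff)
    qed
    also have "\<dots> \<longleftrightarrow> \<iota> (\<delta> a + \<delta> b) = \<iota> x" by (simp add: \<iota>add \<iota>\<delta>)
    also have "\<dots> \<longleftrightarrow> \<delta> a + \<delta> b = x" using \<iota>inj by (simp add: inj_eq)
    finally show ?thesis using phi_alt[of t \<iota> x] ab by (simp add: n_def)
  qed
  have \<delta>inj: "inj_on \<delta> {..<n}"
  proof (rule inj_onI)
    fix a b assume ab: "a \<in> {..<n}" "b \<in> {..<n}" and "\<delta> a = \<delta> b"
    hence "\<beta> a = \<beta> b" using \<iota>\<delta> by metis
    hence bl: "bit a k = bit b k" if "k < t" for k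
    proof -
      have kk: "t - 1 - (t - 1 - k) = k" "t - 1 - k < t" using that by auto
      have "\<beta> a (t - 1 - k) = \<beta> b (t - 1 - k)" using \<open>\<beta> a = \<beta> b\<close> by simp
      thus ?thesis using kk unfolding \<beta>_def by simp
    qed
    have ta: "take_bit t a = a" "take_bit t b = b" using ab by (auto simp: n_def take_bit_nat_eq_self_iff)
    show "a = b"
    proof (rule bit_eqI)
      fix k
      show "bit a k = bit b k"
      proof (cases "k < t")
        case True thus ?thesis using bl by simp
      next
        case False
        have "\<not> bit (take_bit t a) k" "\<not> bit (take_bit t b) k" using False by (simp_all add: bit_take_bit_iff)
        thus ?thesis using ta by simp
      qed
    qed
  qed
  have \<delta>bij: "bij_betw \<delta> {..<n} UNIV"
  proof -
    have "card (\<delta> ` {..<n}) = card (UNIV :: 'a set)" using card card_image[OF \<delta>inj] by simp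
    hence "\<delta> ` {..<n} = UNIV" by (intro card_subset_eq) auto
    thus ?thesis using \<delta>inj by (simp add: bij_betw_def)
  qed
  have \<alpha>bij: "bij_betw \<alpha> {..<n} UNIV" using assms(4) by (simp add: n_def lessThan_atLeast0)
  define ee where "ee = \<alpha> i + \<alpha> j"
  have ee: "ee \<noteq> 0"
  proof
    assume "ee = 0"
    hence "\<alpha> i = \<alpha> j" using char2_eq[OF c2, of "\<alpha> i" "\<alpha> j" 0] by (simp add: ee_def)
    thus False using assms(6,7,8) \<alpha>bij by (auto simp: bij_betw_def inj_on_def n_def)
  qed
  have blkC: "W_blk t \<iota> \<alpha> W l \<in> carrier_mat (n*n) (n*n)" for l by (simp add: W_blk_def n_def)
  have blkE: "W_blk t \<iota> \<alpha> W l $$ (k*n+a, p*n+c) = W $$ (k, p) * (if \<delta> a + \<delta> c = \<alpha> l * \<alpha> p then 1 else 0)"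
    if "k<n" "a<n" "p<n" "c<n" for l k a p c
  proof -
    have lt: "k*n+a < n*n" "p*n+c < n*n" using that idx_lt by auto
    show ?thesis using that lt phiE[of a c] by (simp add: W_blk_def n_def[symmetric])
  qed
  have bdims: "dim_row (W_blk t \<iota> \<alpha> W l) = n*n" "dim_col (W_blk t \<iota> \<alpha> W l) = n*n" for l
    using blkC[of l] by auto
  define H where "H = W_blk t \<iota> \<alpha> W i * transpose_mat (W_blk t \<iota> \<alpha> W j)"
  have Hc: "H \<in> carrier_mat (n*n) (n*n)" using mult_carrier_mat[OF blkC[of i], of "transpose_mat (W_blk t \<iota> \<alpha> W j)" "n*n"] blkC[of j] by (simp add: H_def)
  define L where "L a b = inv_into {..<n} \<alpha> ((\<delta> a + \<delta> b)/ee)" for a b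
  have surj: "\<alpha> ` {..<n} = UNIV" using \<alpha>bij by (simp add: bij_betw_def)
  have Lr: "L a b < n" for a b
    unfolding L_def using inv_into_into[of _ \<alpha> "{..<n}"] surj by auto
  have Hent: "H $$ (k*n+a, m*n+b) = W$$(k, L a b) * W$$(m, L a b)"
    if kamb: "k<n" "m<n" "a<n" "b<n" for k m a b
  proof -
    have "H $$ (k*n+a, m*n+b) = (\<Sum>p<n*n. W_blk t \<iota> \<alpha> W i $$ (k*n+a,p) * transpose_mat (W_blk t \<iota> \<alpha> W j) $$ (p, m*n+b))"
      unfolding H_def using blkC idx_lt kamb by (subst mult_entry[of _ "n*n" "n*n" _ "n*n"]) auto
    also have "\<dots> = (\<Sum>p<n*n. W_blk t \<iota> \<alpha> W i $$ (k*n+a,p) * W_blk t \<iota> \<alpha> W j $$ (m*n+b,p))"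
      using idx_lt kamb by (intro sum.cong refl) (auto simp: bdims)
    also have "\<dots> = (\<Sum>l<n. \<Sum>c<n. W_blk t \<iota> \<alpha> W i $$ (k*n+a,l*n+c) * W_blk t \<iota> \<alpha> W j $$ (m*n+b,l*n+c))"
      by (rule sum_split_nn)
    also have "\<dots> = (\<Sum>l<n. W$$(k,l)*W$$(m,l) * (\<Sum>c<n. (if \<delta> a + \<delta> c = \<alpha> i * \<alpha> l then 1 else 0) * (if \<delta> b + \<delta> c = \<alpha> j * \<alpha> l then 1 else 0)))"
    proof (intro sum.cong refl)
      fix l assume l: "l \<in> {..<n}"
      have "(\<Sum>c<n. W_blk t \<iota> \<alpha> W i $$ (k*n+a,l*n+c) * W_blk t \<iota> \<alpha> W j $$ (m*n+b,l*n+c))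
         = (\<Sum>c<n. W$$(k,l)*W$$(m,l) * ((if \<delta> a + \<delta> c = \<alpha> i * \<alpha> l then 1 else 0) * (if \<delta> b + \<delta> c = \<alpha> j * \<alpha> l then 1 else 0)))"
      proof (intro sum.cong refl)
        fix c assume c: "c \<in> {..<n}"
        have l': "l < n" and c': "c < n" using l c by auto
        show "W_blk t \<iota> \<alpha> W i $$ (k*n+a,l*n+c) * W_blk t \<iota> \<alpha> W j $$ (m*n+b,l*n+c)
           = W$$(k,l)*W$$(m,l) * ((if \<delta> a + \<delta> c = \<alpha> i * \<alpha> l then 1 else 0) * (if \<delta> b + \<delta> c = \<alpha> j * \<alpha> l then 1 else 0))"
          by (simp only: blkE[OF kamb(1) kamb(3) l' c'] blkE[OF kamb(2) kamb(4) l' c']) (simp only: ac_simps)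
      qed
      thus "(\<Sum>c<n. W_blk t \<iota> \<alpha> W i $$ (k*n+a,l*n+c) * W_blk t \<iota> \<alpha> W j $$ (m*n+b,l*n+c))
         = W$$(k,l)*W$$(m,l) * (\<Sum>c<n. (if \<delta> a + \<delta> c = \<alpha> i * \<alpha> l then 1 else 0) * (if \<delta> b + \<delta> c = \<alpha> j * \<alpha> l then 1 else 0))"
        by (simp only: sum_distrib_left)
    qed
    also have "\<dots> = (\<Sum>l<n. if l = L a b then W$$(k,l)*W$$(m,l) else 0)"
    proof (intro sum.cong refl)
      fix l assume l: "l \<in> {..<n}"
      have "(\<delta> a + \<delta> b = \<alpha> i * \<alpha> l + \<alpha> j * \<alpha> l) \<longleftrightarrow> \<alpha> l = (\<delta> a + \<delta> b)/ee"
      proof -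
        have "\<alpha> l = (\<delta> a + \<delta> b)/ee \<longleftrightarrow> \<alpha> l * ee = \<delta> a + \<delta> b" using ee by (simp add: eq_divide_eq)
        moreover have "\<alpha> l * ee = \<alpha> i * \<alpha> l + \<alpha> j * \<alpha> l" by (simp add: ee_def algebra_simps)
        ultimately show ?thesis by auto
      qed
      also have "\<dots> \<longleftrightarrow> l = L a b"
      proof
        assume "\<alpha> l = (\<delta> a + \<delta> b)/ee"
        thus "l = L a b" unfolding L_def using bij_betw_inv_into_left[OF \<alpha>bij l] by metis
      next
        assume "l = L a b"
        thus "\<alpha> l = (\<delta> a + \<delta> b)/ee" unfolding L_def using f_inv_into_f[of _ \<alpha> "{..<n}"] surj by simp
      qed
      finally have eqv: "(\<delta> a + \<delta> b = \<alpha> i * \<alpha> l + \<alpha> j * \<alpha> l) \<longleftrightarrow> l = L a b" .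
      show "W$$(k,l)*W$$(m,l) * (\<Sum>c<n. (if \<delta> a + \<delta> c = \<alpha> i * \<alpha> l then 1 else 0) * (if \<delta> b + \<delta> c = \<alpha> j * \<alpha> l then 1 else 0))
          = (if l = L a b then W$$(k,l)*W$$(m,l) else 0)"
        using inner_sum[OF c2 \<delta>bij, of "\<delta> a" "\<alpha> i * \<alpha> l" "\<delta> b" "\<alpha> j * \<alpha> l"] eqv by simp
    qed
    also have "\<dots> = W$$(k, L a b)*W$$(m, L a b)" using Lr by (simp add: sum.delta)
    finally show ?thesis .
  qed
  have Wh: "hadamard n W" using assms(5) by (simp add: n_def)
  have "bush_type n H"
    by (rule bush_core[OF n \<delta>bij \<alpha>bij ee Wh Hc]) (use Hent in \<open>simp add: L_def\<close>)
  thus ?thesis by (simp add: H_def n_def)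
qed

end
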